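(* In a hierarchical tensor factorization with mode tree $\mathcal T$, for any $\nu\in\mathrm{int}(\mathcal T)$ and $r\in[R_{Pa(\nu)}]$: $$\|\mathcal W^{(\nu,r)}\|\le\|W^{(\nu)}_{:,r}\|\cdot\prod_{\nu_c\in C(\nu)}\|\mathcal W^{(\nu_c,:)}\|.$$
   Context: Fix $N\in\mathbb N$, $D_1,\dots,D_N\in\mathbb N$; $[K]:=\{1,\dots,K\}$; norms are Frobenius norms; $\otimes$ the tensor product. A mode tree $\mathcal T$ over $[N]$ is a rooted tree whose nodes are labeled by subsets of $[N]$, with exactly $N$ leaves labeled $\{1\},\dots,\{N\}$, and where each interior node's label is the union of its children's labels; nodes are identified with labels, root $[N]$, $\mathrm{int}(\mathcal T)$ interior nodes, $Pa(\nu)$ parent, $C(\nu)$ children (fixed order). A hierarchical tensor factorization has $R_\nu\in\mathbb N$ ($\nu\in\mathrm{int}(\mathcal T)$), $R_{Pa([N])}:=1$, $R_{\{n\}}:=D_n$, weight matrices $W^{(\nu)}\in\mathbb R^{R_\nu\times R_{Pa(\nu)}}$. Intermediate tensors: $\mathcal W^{(\{n\},r)}:=W^{(\{n\})}_{:,r}$; for $\nu\in\mathrm{int}(\mathcal T)\setminus\{[N]\}$ (leaves to root), $r\in[R_{Pa(\nu)}]$: $\mathcal W^{(\nu,r)}:=\pi_\nu\big(\sum_{r'=1}^{R_\nu}W^{(\nu)}_{r',r}\bigotimes_{\nu_c\in C(\nu)}\mathcal W^{(\nu_c,r')}\big)$; end tensor $\mathcal W_H:=\pi_{[N]}\big(\sum_{r'=1}^{R_{[N]}}W^{([N])}_{r',1}\bigotimes_{\nu_c\in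 C([N])}\mathcal W^{(\nu_c,r')}\big)$, where $\pi_\nu$ permutes modes (ordered by children, each child's elements ascending) into ascending order of the elements of $\nu$; by convention $\mathcal W^{([N],1)}:=\mathcal W_H$. For $\nu\in\mathcal T$, $\mathcal W^{(\nu,:)}$ is the tensor obtained by stacking $(\mathcal W^{(\nu,r)})_{r=1}^{R_{Pa(\nu)}}$ along an additional last mode, i.e. $\mathcal W^{(\nu,:)}_{:,\dots,:,r}=\mathcal W^{(\nu,r)}$. *)

theory Defs
  imports Complex_Main "HOL-Library.FuncSet"
begin

datatype mtree = MLeaf nat | MNode "mtree list"

fun label :: "mtree \<Rightarrow> nat set" where
  "label (MLeaf n) = {n}"
| "label (MNode ts) = (\<Union>t\<in>set ts. label t)"

fun leaves :: "mtree \<Rightarrow> nat list" where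
  "leaves (MLeaf n) = [n]"
| "leaves (MNode ts) = concat (map leaves ts)"

fun subtrees :: "mtree \<Rightarrow> mtree list" where
  "subtrees (MLeaf n) = [MLeaf n]"
| "subtrees (MNode ts) = MNode ts # concat (map subtrees ts)"

fun children_nonempty :: "mtree \<Rightarrow> bool" where
  "children_nonempty (MLeaf n) = True"
| "children_nonempty (MNode ts) = (ts \<noteq> [] \<and> (\<forall>t\<in>set ts. children_nonempty t))"

text \<open>A mode tree over [N]: exactly N leaves, labelled {1},...,{N}; interior nodes are
  non-leaves (nonempty children lists); nodes are identified with their labels (distinct labels).\<close>
definition mode_tree :: "nat \<Rightarrow> mtree \<Rightarrow> bool" where
  "mode_tree N T \<longleftrightarrow> distinct (leaves T) \<and> set (leaves T) = {1..N}
     \<and> children_nonempty T \<and> distinct (map label (subtrees T))"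

text \<open>Pairs (node, R_{Pa(node)}) of all nodes of the tree; the root gets R_{Pa([N])} = 1.\<close>
fun nodes_pr :: "(nat set \<Rightarrow> nat) \<Rightarrow> mtree \<Rightarrow> nat \<Rightarrow> (mtree \<times> nat) set" where
  "nodes_pr R (MLeaf n) pr = {(MLeaf n, pr)}"
| "nodes_pr R (MNode ts) pr = insert (MNode ts, pr) (\<Union>c\<in>set ts. nodes_pr R c (R (label (MNode ts))))"

text \<open>A tensor over the modes of a label set is represented
  as a function of a multi-index i, where i n is the index in mode n (1-based); this makes
  the mode permutation pi_nu implicit (modes are addressed by their number).
  W nu r' r is the entry (r', r) of the weight matrix W^{(nu)}; R gives R_nu for interior nodes,
  and R_{{n}} = D n.\<close>
fun tens :: "(nat \<Rightarrow> nat) \<Rightarrow> (nat set \<Rightarrow> nat) \<Rightarrow> (nat set \<Rightarrow> nat \<Rightarrow> nat \<Rightarrow> real)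
              \<Rightarrow> mtree \<Rightarrow> nat \<Rightarrow> (nat \<Rightarrow> nat) \<Rightarrow> real" where
  "tens D R W (MLeaf n) r i = W {n} (i n) r"
| "tens D R W (MNode ts) r i =
     (\<Sum>r'=1..R (label (MNode ts)). W (label (MNode ts)) r' r * prod_list (map (\<lambda>c. tens D R W c r' i) ts))"

definition idx :: "(nat \<Rightarrow> nat) \<Rightarrow> nat set \<Rightarrow> (nat \<Rightarrow> nat) set" where
  "idx D L = PiE L (\<lambda>n. {1..D n})"

definition fnorm :: "'a set \<Rightarrow> ('a \<Rightarrow> real) \<Rightarrow> real" where
  "fnorm S f = sqrt (\<Sum>x\<in>S. (f x)\<^sup>2)"

text \<open>Norm of the stacked tensor W^{(c,:)}, stacked along an extra last mode of size Rpa = R_{Pa(c)}.\<close>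
definition stack_norm :: "(nat \<Rightarrow> nat) \<Rightarrow> (nat set \<Rightarrow> nat) \<Rightarrow> (nat set \<Rightarrow> nat \<Rightarrow> nat \<Rightarrow> real)
              \<Rightarrow> mtree \<Rightarrow> nat \<Rightarrow> real" where
  "stack_norm D R W c Rpa = fnorm (idx D (label c) \<times> {1..Rpa}) (\<lambda>(i, r). tens D R W c r i)"

end

theory Submission
  imports Defs "HOL-Analysis.Convex"
begin
lemma split_PiE:
  fixes f g :: "('a \<Rightarrow> 'b) \<Rightarrow> real"
  assumes disj: "A \<inter> B = {}"
    and fA: "\<And>i j. (\<forall>n\<in>A. i n = j n) \<Longrightarrow> f i = f j"
    and gB: "\<And>i j. (\<forall>n\<in>B. i n = j n) \<Longrightarrow> g i = g j"
  shows "(\<Sum>i\<in>PiE (A\<union>B) S. f i * g i) = (\<Sum>i\<in>PiE A S. f i) * (\<Sum>j\<in>PiE B S. g j)"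
proof -
  define h where "h = (\<lambda>(a::'a\<Rightarrow>'b,b). \<lambda>n. if n\<in>A then a n else b n)"
  have bij: "bij_betw h (PiE A S \<times> PiE B S) (PiE (A\<union>B) S)"
  proof (rule bij_betwI')
    fix x y assume "x \<in> PiE A S \<times> PiE B S" "y \<in> PiE A S \<times> PiE B S"
    then show "(h x = h y) = (x = y)"
      using disj unfolding h_def
      apply (cases x; cases y; auto simp: fun_eq_iff PiE_def extensional_def)
      by (metis disjoint_iff)+
  next
    fix x assume "x \<in> PiE A S \<times> PiE B S" then show "h x \<in> PiE (A\<union>B) S"
      unfolding h_def by (cases x) (auto simp: PiE_def extensional_def)
  next
    fix y assume y: "y \<in> PiE (A\<union>B) S"
    show "\<exists>x\<in>PiE A S \<times> PiE B S. y = h x"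
    proof (intro bexI)
      show "y = h (restrict y A, restrict y B)" using y unfolding h_def
        by (auto simp: fun_eq_iff PiE_def extensional_def)
      show "(restrict y A, restrict y B) \<in> PiE A S \<times> PiE B S" using y by auto
    qed
  qed
  have "(\<Sum>i\<in>PiE A S. f i) * (\<Sum>j\<in>PiE B S. g j) = (\<Sum>x\<in>PiE A S \<times> PiE B S. f (fst x) * g (snd x))"
    unfolding sum_product sum.cartesian_product by (simp add: case_prod_beta)
  also have "\<dots> = (\<Sum>x\<in>PiE A S \<times> PiE B S. f (h x) * g (h x))"
  proof (rule sum.cong[OF refl])
    fix x assume "x \<in> PiE A S \<times> PiE B S"
    have "f (h x) = f (fst x)" by (rule fA) (auto simp: h_def split: prod.splits)
    moreover have "g (h x) = g (snd x)" by (rule gB) (use disj in \<open>auto simp: h_def split: prod.splits\<close>)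
    ultimately show "f (fst x) * g (snd x) = f (h x) * g (h x)" by simp
  qed
  also have "\<dots> = (\<Sum>i\<in>PiE (A\<union>B) S. f i * g i)"
    by (rule sum.reindex_bij_betw[OF bij, where g="\<lambda>i. f i * g i"])
  finally show ?thesis by simp
qed

lemma tens_local: "(\<forall>n\<in>label c. i n = j n) \<Longrightarrow> tens D R W c r i = tens D R W c r j"
proof (induction c arbitrary: r)
  case (MLeaf x)
  then show ?case by simp
next
  case (MNode ts)
  have eq: "\<And>r'. map (\<lambda>c. tens D R W c r' i) ts = map (\<lambda>c. tens D R W c r' j) ts"
    using MNode by (auto intro!: map_cong)
  show ?case by (simp only: tens.simps eq)
qed

lemma label_leaves: "label t = set (leaves t)"
  by (induction t) auto

lemma nodes_sub: "(t,p) \<in> nodes_pr R T q \<Longrightarrow> t \<in> set (subtrees T)"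
  by (induction T arbitrary: q) auto

lemma sub_distinct: "t \<in> set (subtrees T) \<Longrightarrow> distinct (leaves T) \<Longrightarrow> distinct (leaves t)"
  by (induction T) (auto simp: distinct_concat_iff)

lemma sub_cne: "t \<in> set (subtrees T) \<Longrightarrow> children_nonempty T \<Longrightarrow> children_nonempty t"
  by (induction T) auto

lemma prod_list_nonneg': "(\<And>x. x \<in> set xs \<Longrightarrow> (0::real) \<le> x) \<Longrightarrow> 0 \<le> prod_list xs"
  by (induction xs) auto

lemma L1:
  assumes "distinct (concat (map leaves cs))"
  shows "(\<Sum>i\<in>idx D (\<Union>c\<in>set cs. label c). (prod_list (map (\<lambda>c. tens D R W c r' i) cs))\<^sup>2)
       = prod_list (map (\<lambda>c. \<Sum>i\<in>idx D (label c). (tens D R W c r' i)\<^sup>2) cs)"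
  using assms
proof (induction cs)
  case Nil
  then show ?case by (simp add: idx_def)
next
  case (Cons c cs)
  have disj: "label c \<inter> (\<Union>c\<in>set cs. label c) = {}"
    using Cons.prems by (auto simp: label_leaves)
  have "(\<Sum>i\<in>idx D (\<Union>c\<in>set (c#cs). label c). (prod_list (map (\<lambda>c. tens D R W c r' i) (c#cs)))\<^sup>2)
      = (\<Sum>i\<in>PiE (label c \<union> (\<Union>c\<in>set cs. label c)) (\<lambda>n. {1..D n}).
           (tens D R W c r' i)\<^sup>2 * (prod_list (map (\<lambda>c. tens D R W c r' i) cs))\<^sup>2)"
    by (simp add: idx_def power_mult_distrib)
  also have "\<dots> = (\<Sum>i\<in>idx D (label c). (tens D R W c r' i)\<^sup>2) *
       (\<Sum>i\<in>idx D (\<Union>c\<in>set cs. label c). (prod_list (map (\<lambda>c. tens D R W c r' i) cs))\<^sup>2)"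
    unfolding idx_def
  proof (rule split_PiE[OF disj])
    fix i j :: "nat \<Rightarrow> nat" assume "\<forall>n\<in>label c. i n = j n"
    then show "(tens D R W c r' i)\<^sup>2 = (tens D R W c r' j)\<^sup>2" using tens_local by metis
  next
    fix i j :: "nat \<Rightarrow> nat" assume h: "\<forall>n\<in>(\<Union>c\<in>set cs. label c). i n = j n"
    have eq: "map (\<lambda>c. tens D R W c r' i) cs = map (\<lambda>c. tens D R W c r' j) cs"
      by (rule map_cong[OF refl], rule tens_local) (use h in auto)
    show "(prod_list (map (\<lambda>c. tens D R W c r' i) cs))\<^sup>2 = (prod_list (map (\<lambda>c. tens D R W c r' j) cs))\<^sup>2"
      by (simp only: eq)
  qed
  also have "\<dots> = prod_list (map (\<lambda>c. \<Sum>i\<in>idx D (label c). (tens D R W c r' i)\<^sup>2) (c#cs))"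
    using Cons by simp
  finally show ?case .
qed

lemma L2:
  fixes a :: "'c \<Rightarrow> 'd \<Rightarrow> real"
  assumes "cs \<noteq> []" "finite A" "\<And>c r. 0 \<le> a c r"
  shows "(\<Sum>r\<in>A. prod_list (map (\<lambda>c. a c r) cs)) \<le> prod_list (map (\<lambda>c. \<Sum>r\<in>A. a c r) cs)"
  using assms(1)
proof (induction cs)
  case Nil
  then show ?case by simp
next
  case (Cons c cs)
  show ?case
  proof (cases "cs = []")
    case True
    then show ?thesis by simp
  next
    case False
    let ?P = "\<lambda>r. prod_list (map (\<lambda>c. a c r) cs)"
    have Pnn: "0 \<le> ?P r" for r by (rule prod_list_nonneg') (auto intro: assms(3))
    have "(\<Sum>r\<in>A. prod_list (map (\<lambda>c. a c r) (c#cs))) = (\<Sum>r\<in>A. a c r * ?P r)" by simp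
    also have "\<dots> \<le> (\<Sum>r\<in>A. a c r * (\<Sum>r\<in>A. ?P r))"
    proof (rule sum_mono)
      fix r assume "r \<in> A"
      then have "?P r \<le> (\<Sum>r\<in>A. ?P r)" using assms(2) Pnn by (intro member_le_sum) auto
      then show "a c r * ?P r \<le> a c r * (\<Sum>r\<in>A. ?P r)" using assms(3) by (intro mult_left_mono) auto
    qed
    also have "\<dots> = (\<Sum>r\<in>A. a c r) * (\<Sum>r\<in>A. ?P r)" by (simp add: sum_distrib_right)
    also have "\<dots> \<le> (\<Sum>r\<in>A. a c r) * prod_list (map (\<lambda>c. \<Sum>r\<in>A. a c r) cs)"
      using Cons.IH[OF False] assms(3) by (intro mult_left_mono sum_nonneg) auto
    finally show ?thesis by simp
  qed
qed

lemma sqrt_prod_list: "(\<And>x. x \<in> set xs \<Longrightarrow> 0 \<le> f x) \<Longrightarrow>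
   sqrt (prod_list (map f xs)) = prod_list (map (\<lambda>x. sqrt (f x)) xs)"
  by (induction xs) (auto simp: real_sqrt_mult)

lemma stack_norm_eq: "stack_norm D R W c Rn = sqrt (\<Sum>r'\<in>{1..Rn}. \<Sum>i\<in>idx D (label c). (tens D R W c r' i)\<^sup>2)"
proof -
  let ?I = "idx D (label c)" and ?B = "{1..Rn}"
  have "(\<Sum>x\<in>?I \<times> ?B. ((\<lambda>(i, r). tens D R W c r i) x)\<^sup>2) = (\<Sum>(i,r)\<in>?I \<times> ?B. (tens D R W c r i)\<^sup>2)"
    by (simp add: case_prod_beta)
  also have "\<dots> = (\<Sum>i\<in>?I. \<Sum>r\<in>?B. (tens D R W c r i)\<^sup>2)"
    by (rule sum.cartesian_product[symmetric])
  also have "\<dots> = (\<Sum>r\<in>?B. \<Sum>i\<in>?I. (tens D R W c r i)\<^sup>2)"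
    by (rule sum.swap)
  finally show ?thesis unfolding stack_norm_def fnorm_def by simp
qed


theorem lemma7:
  fixes N :: nat and D :: "nat \<Rightarrow> nat" and R :: "nat set \<Rightarrow> nat"
    and W :: "nat set \<Rightarrow> nat \<Rightarrow> nat \<Rightarrow> real"
    and T :: mtree and cs :: "mtree list" and pr r :: nat
  assumes "N \<ge> 1"
    and "mode_tree N T"
    and "\<forall>n\<in>{1..N}. D n \<ge> 1"
    and "\<forall>t\<in>set (subtrees T). (\<exists>ts. t = MNode ts) \<longrightarrow> R (label t) \<ge> 1"
    and "(MNode cs, pr) \<in> nodes_pr R T 1"
    and "r \<in> {1..pr}"
  shows "fnorm (idx D (label (MNode cs))) (tens D R W (MNode cs) r)
         \<le> fnorm {1..R (label (MNode cs))} (\<lambda>r'. W (label (MNode cs)) r' r)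
           * prod_list (map (\<lambda>c. stack_norm D R W c (R (label (MNode cs)))) cs)"
proof -
  define L where "L = label (MNode cs)"
  define Rn where "Rn = R L"
  define I where "I = idx D L"
  define P where "P = (\<lambda>r' i. prod_list (map (\<lambda>c. tens D R W c r' i) cs))"
  define a where "a = (\<lambda>c r'. \<Sum>i\<in>idx D (label c). (tens D R W c r' i)\<^sup>2)"
  define SW where "SW = (\<Sum>r'\<in>{1..Rn}. (W L r' r)\<^sup>2)"
  have sub: "MNode cs \<in> set (subtrees T)" using assms(5) by (rule nodes_sub)
  have dist: "distinct (concat (map leaves cs))"
    using sub_distinct[OF sub] assms(2) by (simp add: mode_tree_def)
  have ne: "cs \<noteq> []"
    using sub_cne[OF sub] assms(2) by (simp add: mode_tree_def)
  have Lu: "L = (\<Union>c\<in>set cs. label c)" by (simp add: L_def)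
  have t: "tens D R W (MNode cs) r i = (\<Sum>r'\<in>{1..Rn}. W L r' r * P r' i)" for i
    by (simp add: Rn_def L_def P_def)
  have SWnn: "0 \<le> SW" unfolding SW_def by (simp add: sum_nonneg)
  have "(\<Sum>i\<in>I. (tens D R W (MNode cs) r i)\<^sup>2) \<le> (\<Sum>i\<in>I. SW * (\<Sum>r'\<in>{1..Rn}. (P r' i)\<^sup>2))"
    unfolding t SW_def by (rule sum_mono) (rule Cauchy_Schwarz_ineq_sum)
  also have "\<dots> = SW * (\<Sum>r'\<in>{1..Rn}. \<Sum>i\<in>I. (P r' i)\<^sup>2)"
    by (simp add: sum_distrib_left sum.swap[of _ I])
  also have "\<dots> = SW * (\<Sum>r'\<in>{1..Rn}. prod_list (map (\<lambda>c. a c r') cs))"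
    unfolding I_def Lu P_def a_def using L1[OF dist] by simp
  also have "\<dots> \<le> SW * prod_list (map (\<lambda>c. \<Sum>r'\<in>{1..Rn}. a c r') cs)"
    by (rule mult_left_mono[OF L2[OF ne] SWnn]) (auto simp: a_def sum_nonneg)
  finally have main: "(\<Sum>i\<in>I. (tens D R W (MNode cs) r i)\<^sup>2) \<le> SW * prod_list (map (\<lambda>c. \<Sum>r'\<in>{1..Rn}. a c r') cs)" .
  have "fnorm I (tens D R W (MNode cs) r) \<le> sqrt (SW * prod_list (map (\<lambda>c. \<Sum>r'\<in>{1..Rn}. a c r') cs))"
    unfolding fnorm_def using main by simp
  also have "\<dots> = sqrt SW * prod_list (map (\<lambda>c. sqrt (\<Sum>r'\<in>{1..Rn}. a c r')) cs)"
    by (simp add: real_sqrt_mult sqrt_prod_list a_def sum_nonneg)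
  also have "\<dots> = fnorm {1..Rn} (\<lambda>r'. W L r' r) * prod_list (map (\<lambda>c. stack_norm D R W c Rn) cs)"
    by (simp add: stack_norm_eq fnorm_def SW_def a_def)
  finally show ?thesis unfolding I_def Rn_def L_def .
qed

end
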